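(* For every complex number $s$ with $\operatorname{Re}(s)>3$, $$\sum_{n\ge1}\frac{\varphi(n)\delta(n)}{n^s}=\frac{\zeta(s-2)}{\zeta(s-1)}\Big(F(s-2)-F(s-1)\Big).$$
   Context: The arithmetic derivative $\delta$ is defined by $\delta(p)=1$ for every prime $p$ and $\delta(mn)=m\delta(n)+n\delta(m)$ for all positive integers $m,n$; equivalently $\delta(1)=0$ and $\delta(n)=n\sum_{p^\alpha\| n}\alpha/p$. $\varphi$ is Euler's totient function, $\zeta$ is the Riemann zeta function and $F(s)=\sum_{p\text{ prime}}\frac{1}{p^{s+1}-p}$. *)

theory Defs
  imports "HOL-Analysis.Analysis" "HOL-Number_Theory.Number_Theory"
begin

text \<open>Arithmetic derivative: delta(1) = 0 and
  delta(n) = n * (sum over p^a || n of a/p), written over the naturals.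
  We also set delta(0) = 0 (irrelevant: the series starts at n = 1).\<close>
definition arith_deriv :: "nat \<Rightarrow> nat" where
  "arith_deriv n = (\<Sum>p\<in>prime_factors n. multiplicity p n * (n div p))"

text \<open>Riemann zeta function in its Dirichlet-series form; it is only used
  for Re(s) > 1, where this series converges.\<close>
definition zeta_series :: "complex \<Rightarrow> complex" where
  "zeta_series s = (\<Sum>n. 1 / (of_nat (Suc n)) powr s)"

definition F_prime :: "complex \<Rightarrow> complex" where
  "F_prime s = infsum (\<lambda>p::nat. 1 / ((of_nat p) powr (s + 1) - of_nat p)) {p. prime p}"

end

theory Submission
  imports Defs
begin


definition cc :: "nat \<Rightarrow> nat \<Rightarrow> nat" where "cc p k = p^(k-1) * (p^k - 1)"
definition aa :: "nat \<Rightarrow> nat" where "aa m = m * totient m"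

lemma aa_pp: assumes "prime p" shows "int (aa (p ^ Suc j)) = int p ^ (2*j+1) * (int p - 1)"
proof -
  have "p \<ge> 1" using prime_gt_0_nat[OF assms] by simp
  have "aa (p ^ Suc j) = p ^ Suc j * (p^j * (p - 1))"
    unfolding aa_def using totient_prime_power_Suc[OF assms] by simp
  then have "int (aa (p ^ Suc j)) = int p ^ Suc j * int p ^ j * (int p - 1)"
    using \<open>p \<ge> 1\<close> by (simp add: of_nat_diff)
  also have "int p ^ Suc j * int p ^ j = int p ^ (2*j+1)"
    by (subst power_add[symmetric]) (simp add: mult_2)
  finally show ?thesis .
qed

lemma cc_int: assumes "prime p" "k \<ge> 1" shows "int (cc p k) = int p ^ (k-1) * (int p ^ k - 1)"
proof -
  have "p ^ k \<ge> 1" using prime_gt_0_nat[OF assms(1)] by simp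
  then show ?thesis unfolding cc_def by (simp add: of_nat_diff)
qed

lemma local_id_int:
  assumes "prime p"
  shows "(\<Sum>k=1..Suc u. int (cc p k) * int (aa (p^(Suc u - k)))) = int (Suc u) * int p ^ (2*u) * (int p - 1)"
proof (induction u)
  case 0
  then show ?case using cc_int[OF assms, of 1] by (simp add: aa_def)
next
  case (Suc u)
  define f where "f v k = int (cc p k) * int (aa (p^(v - k)))" for v k
  have split1: "(\<Sum>k=1..Suc (Suc u). f (Suc (Suc u)) k) = (\<Sum>k=1..u. f (Suc (Suc u)) k) + f (Suc (Suc u)) (Suc u) + f (Suc (Suc u)) (Suc (Suc u))"
    by (simp add: sum.atLeast_Suc_atMost_Suc_shift)
  have split2: "(\<Sum>k=1..Suc u. f (Suc u) k) = (\<Sum>k=1..u. f (Suc u) k) + f (Suc u) (Suc u)"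
    by simp
  have rem: "(\<Sum>k=1..u. f (Suc (Suc u)) k) = int p ^ 2 * (\<Sum>k=1..u. f (Suc u) k)"
    unfolding sum_distrib_left
  proof (rule sum.cong[OF refl])
    fix k assume k: "k \<in> {1..u}"
    then obtain j where j: "Suc u - k = Suc j" by (metis Suc_diff_le atLeastAtMost_iff diff_Suc_Suc)
    then have j2: "Suc (Suc u) - k = Suc (Suc j)" using k by auto
    show "f (Suc (Suc u)) k = int p ^ 2 * f (Suc u) k"
      unfolding f_def j j2 aa_pp[OF assms] by (simp add: algebra_simps power2_eq_square)
  qed
  have IH: "(\<Sum>k=1..Suc u. f (Suc u) k) = int (Suc u) * int p ^ (2*u) * (int p - 1)"
    using Suc.IH unfolding f_def .
  have a1: "f (Suc (Suc u)) (Suc u) = int (cc p (Suc u)) * (int p * (int p - 1))"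
    unfolding f_def using aa_pp[OF assms, of 0] by simp
  have a2: "f (Suc (Suc u)) (Suc (Suc u)) = int (cc p (Suc (Suc u)))"
    unfolding f_def by (simp add: aa_def)
  have a3: "f (Suc u) (Suc u) = int (cc p (Suc u))"
    unfolding f_def by (simp add: aa_def)
  have "(\<Sum>k=1..Suc (Suc u). f (Suc (Suc u)) k) =
     int p ^ 2 * (int (Suc u) * int p ^ (2*u) * (int p - 1) - int (cc p (Suc u)))
     + int (cc p (Suc u)) * (int p * (int p - 1)) + int (cc p (Suc (Suc u)))"
  proof -
    have s1: "sum (f (Suc u)) {1..u} = int (Suc u) * int p ^ (2 * u) * (int p - 1) - int (cc p (Suc u))"
      using split2 IH a3 by linarith
    show ?thesis by (simp only: split1 rem s1 a1 a2)
  qed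
  also have "\<dots> = int (Suc (Suc u)) * int p ^ (2 * Suc u) * (int p - 1)"
  proof -
    define y where "y = int p ^ u"
    have e0: "int p ^ (2*u) = y^2" unfolding y_def power_mult[symmetric] by (simp add: mult.commute)
    have e1: "int p ^ (2*u) = y^2" "int p ^ (2 * Suc u) = int p ^ 2 * y^2" "int p ^ Suc u = int p * y"
      "int p ^ Suc (Suc u) = int p * int p * y"
      using e0 by (simp_all add: y_def power2_eq_square)
    show ?thesis
      unfolding cc_int[OF assms, of "Suc u", simplified] cc_int[OF assms, of "Suc (Suc u)", simplified] e1
      by (simp add: y_def[symmetric] algebra_simps power2_eq_square)
  qed
  finally show ?case unfolding f_def .
qed

definition QQ :: "nat \<Rightarrow> (nat \<times> nat) set" where
  "QQ n = {(p,k). prime p \<and> 1 \<le> k \<and> p^k dvd n}"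

lemma QQ_mem: fixes n p k :: nat assumes "n > 0"
  shows "(prime p \<and> 1 \<le> k \<and> p^k dvd n) \<longleftrightarrow> (p \<in> prime_factors n \<and> k \<in> {1..multiplicity p n})"
proof
  assume pk: "prime p \<and> 1 \<le> k \<and> p^k dvd n"
  then have "p dvd n" using dvd_trans[OF dvd_power[of k p]] by auto
  moreover have "k \<le> multiplicity p n"
    using pk assms power_dvd_iff_le_multiplicity[of n p k] prime_gt_1_nat[of p] by simp
  ultimately show "p \<in> prime_factors n \<and> k \<in> {1..multiplicity p n}"
    using pk assms by (auto simp: in_prime_factors_iff)
next
  assume "p \<in> prime_factors n \<and> k \<in> {1..multiplicity p n}"
  then have "prime p" "1 \<le> k" "k \<le> multiplicity p n" by (auto simp: in_prime_factors_iff)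
  then show "prime p \<and> 1 \<le> k \<and> p^k dvd n" using multiplicity_dvd'[of k p n] by simp
qed

lemma QQ_eq: assumes "n > 0" shows "QQ n = Sigma (prime_factors n) (\<lambda>p. {1..multiplicity p n})"
  unfolding QQ_def using QQ_mem[OF assms] by auto

lemma finite_QQ: assumes "n > 0" shows "finite (QQ n)"
  using QQ_eq[OF assms] by auto

lemma per_prime:
  assumes n: "n > 0" and p: "p \<in> prime_factors n"
  shows "(\<Sum>k=1..multiplicity p n. cc p k * aa (n div p^k)) = multiplicity p n * (n div p) * totient n"
proof -
  have pp: "prime p" and pd: "p dvd n" using p by (auto simp: in_prime_factors_iff)
  define v where "v = multiplicity p n"
  have "v > 0" unfolding v_def using pp pd n by (simp add: prime_multiplicity_gt_zero_iff)
  then obtain u where u: "v = Suc u" using gr0_implies_Suc by blast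
  define m where "m = n div p ^ v"
  have nm: "n = p ^ v * m" unfolding m_def v_def using multiplicity_dvd[of p n] by simp
  have ndm: "\<not> p dvd m" unfolding m_def v_def
    using multiplicity_decompose[of n p] n prime_gt_1_nat[OF pp] by simp
  have cop: "coprime (p^j) m" for j using prime_imp_coprime[OF pp ndm] by simp
  have aamul: "aa (p^j * m) = aa (p^j) * aa m" for j
    unfolding aa_def using totient_mult_coprime[OF cop[of j]] by (simp add: algebra_simps)
  have p0: "p > 0" using pp prime_gt_0_nat by blast
  have divk: "n div p^k = p^(v-k) * m" if "k \<le> v" for k
  proof -
    have "p^v = p^k * p^(v-k)" using that by (metis le_add_diff_inverse power_add)
    then have "n = p^k * (p^(v-k) * m)" unfolding nm by (simp add: mult.assoc)
    then show ?thesis using p0 by simp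
  qed
  have "int (\<Sum>k=1..v. cc p k * aa (n div p^k)) = (\<Sum>k=1..v. int (cc p k) * int (aa (p^(v-k)))) * int (aa m)"
    unfolding of_nat_sum sum_distrib_right
    by (rule sum.cong[OF refl]) (simp add: divk aamul)
  also have "\<dots> = int (Suc u) * int p ^ (2*u) * (int p - 1) * int (aa m)"
    unfolding u local_id_int[OF pp] ..
  also have "\<dots> = int (v * (n div p) * totient n)"
  proof -
    have nd: "n div p = p^u * m" using divk[of 1] u by simp
    have tn: "totient n = p^u * (p-1) * totient m"
      unfolding nm using totient_mult_coprime[OF cop[of v]] totient_prime_power_Suc[OF pp] u by simp
    have "int p ^ (2*u) = int p ^ u * int p ^ u" by (simp add: mult_2 power_add)
    moreover have "int (p - 1) = int p - 1" using p0 by simp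
    ultimately show ?thesis unfolding nd tn aa_def u of_nat_mult of_nat_power
      by (simp add: algebra_simps)
  qed
  finally show ?thesis unfolding v_def by (simp only: of_nat_eq_iff)
qed

lemma arith_id:
  assumes n: "n > 0"
  shows "(\<Sum>(p,k)\<in>QQ n. cc p k * aa (n div p^k)) = totient n * arith_deriv n"
proof -
  have "(\<Sum>(p,k)\<in>QQ n. cc p k * aa (n div p^k)) = (\<Sum>p\<in>prime_factors n. \<Sum>k=1..multiplicity p n. cc p k * aa (n div p^k))"
    unfolding QQ_eq[OF n] by (subst sum.Sigma) auto
  also have "\<dots> = (\<Sum>p\<in>prime_factors n. multiplicity p n * (n div p) * totient n)"
    by (rule sum.cong[OF refl]) (rule per_prime[OF n])
  also have "\<dots> = totient n * arith_deriv n"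
    unfolding arith_deriv_def sum_distrib_left by (simp add: algebra_simps)
  finally show ?thesis .
qed



lemma cpowr_nz: "n > 0 \<Longrightarrow> (of_nat n :: complex) powr z \<noteq> 0"
  by (simp add: powr_def)

lemma cpowr_mult: "(of_nat (a*b) :: complex) powr z = of_nat a powr z * of_nat b powr z"
  by (simp add: powr_times_real)

lemma cpowr_pow: "(of_nat (p^k) :: complex) powr z = (of_nat p powr z) ^ k"
proof (induction k)
  case (Suc k)
  have "(of_nat (p^Suc k) :: complex) powr z = of_nat p powr z * of_nat (p^k) powr z"
    using cpowr_mult[of p "p^k" z] by simp
  then show ?case using Suc by simp
qed simp

lemma cpowr_norm: "norm ((of_nat n :: complex) powr z) = real n powr Re z"
  using norm_powr_real_powr[of "of_nat n" z] by simp

lemma cpowr_minus1: "n > 0 \<Longrightarrow> (of_nat n :: complex) powr (z - 1) = of_nat n powr z / of_nat n"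
  by (simp add: powr_diff)

lemma cpowr_minus2: "n > 0 \<Longrightarrow> (of_nat n :: complex) powr (z - 2) = of_nat n powr z / (of_nat n)^2"
  by (simp add: powr_diff)

lemma summable_rpowr: "t > 1 \<Longrightarrow> (\<lambda>n::nat. real n powr (-t)) summable_on {1..}"
proof -
  assume t: "t > 1"
  have "summable (\<lambda>n::nat. real n powr (-t))" using t by (simp add: summable_real_powr_iff)
  then have "summable (\<lambda>n::nat. norm (real n powr (-t)))" by simp
  then have "(\<lambda>n::nat. real n powr (-t)) summable_on UNIV"
    using norm_summable_imp_has_sum summable_sums summable_on_def
    by (metis summable_norm_cancel)
  then show ?thesis by (rule summable_on_subset_banach) simp
qed

lemma shift_has_sum: "((\<lambda>n. f (Suc n)) has_sum S) UNIV \<longleftrightarrow> (f has_sum S) {1..}"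
  by (rule has_sum_reindex_bij_witness[of _ "\<lambda>n. n - 1"]) auto

lemma has_sum_prod:
  fixes f :: "'a \<Rightarrow> complex" and g :: "'b \<Rightarrow> complex"
  assumes "(f has_sum a) A" "(g has_sum b) B" "(\<lambda>x. norm (f x)) summable_on A" "(\<lambda>x. norm (g x)) summable_on B"
  shows "((\<lambda>(x,y). f x * g y) has_sum (a*b)) (A \<times> B)"
    and "(\<lambda>z. norm ((\<lambda>(x,y). f x * g y) z)) summable_on (A \<times> B)"
proof -
  have ab: "(\<lambda>z. norm ((\<lambda>(x,y). f x * g y) z)) summable_on (A \<times> B)"
  proof (subst Infinite_Sum.abs_summable_on_Sigma_iff, intro conjI ballI)
    fix x assume "x \<in> A"
    show "(\<lambda>y. norm (case (x, y) of (x, y) \<Rightarrow> f x * g y)) summable_on B"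
      using assms(4) by (simp add: norm_mult summable_on_cmult_right)
  next
    have "(\<lambda>x. norm (f x) * (\<Sum>\<^sub>\<infinity>y\<in>B. norm (g y))) summable_on A"
      using assms(3) by (rule summable_on_cmult_left)
    moreover have "(\<Sum>\<^sub>\<infinity>y\<in>B. norm (case (x, y) of (x, y) \<Rightarrow> f x * g y)) = norm (f x) * (\<Sum>\<^sub>\<infinity>y\<in>B. norm (g y))" for x
      by (simp add: norm_mult infsum_cmult_right')
    ultimately show "(\<lambda>x. norm (\<Sum>\<^sub>\<infinity>y\<in>B. norm (case (x, y) of (x, y) \<Rightarrow> f x * g y))) summable_on A"
      by (simp add: infsum_nonneg)
  qed
  then show "(\<lambda>z. norm ((\<lambda>(x,y). f x * g y) z)) summable_on (A \<times> B)" .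
  show "((\<lambda>(x,y). f x * g y) has_sum (a*b)) (A \<times> B)"
  proof (rule has_sum_SigmaI)
    show "(\<lambda>(x,y). f x * g y) summable_on Sigma A (\<lambda>_. B)"
      using abs_summable_summable[OF ab] by simp
    show "((\<lambda>x. f x * b) has_sum (a*b)) A" using assms(1) by (rule has_sum_cmult_left)
    fix x assume "x \<in> A"
    show "((\<lambda>y. case (x, y) of (x, y) \<Rightarrow> f x * g y) has_sum f x * b) B"
      using has_sum_cmult_right[OF assms(2)] by simp
  qed
qed

lemma zeta_has_sum:
  assumes "Re z > 1"
  shows "((\<lambda>n. 1 / (of_nat n :: complex) powr z) has_sum zeta_series z) {1..}"
    and "(\<lambda>n. norm (1 / (of_nat n :: complex) powr z)) summable_on {1..}"
proof -
  have nrm: "norm (1 / (of_nat n :: complex) powr z) = real n powr (- Re z)" if "n \<in> {1..}" for n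
    using that by (simp add: norm_divide cpowr_norm powr_minus_divide)
  show ns: "(\<lambda>n. norm (1 / (of_nat n :: complex) powr z)) summable_on {1..}"
  proof -
    have "(\<lambda>n. norm (1 / (of_nat n :: complex) powr z)) summable_on {1..} \<longleftrightarrow> (\<lambda>n. real n powr (- Re z)) summable_on {1..}"
      by (rule summable_on_cong) (rule nrm)
    then show ?thesis using summable_rpowr[of "Re z"] assms by simp
  qed
  then have sm: "(\<lambda>n. 1 / (of_nat n :: complex) powr z) summable_on {1..}"
    by (rule abs_summable_summable)
  then have hs: "((\<lambda>n. 1 / (of_nat n :: complex) powr z) has_sum infsum (\<lambda>n. 1 / (of_nat n :: complex) powr z) {1..}) {1..}"
    by simp
  then have "(\<lambda>n. 1 / (of_nat (Suc n) :: complex) powr z) sums infsum (\<lambda>n. 1 / (of_nat n :: complex) powr z) {1..}"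
    using shift_has_sum[of "\<lambda>n. 1 / (of_nat n :: complex) powr z"] has_sum_imp_sums by blast
  then have "zeta_series z = infsum (\<lambda>n. 1 / (of_nat n :: complex) powr z) {1..}"
    unfolding zeta_series_def by (simp add: sums_iff)
  then show "((\<lambda>n. 1 / (of_nat n :: complex) powr z) has_sum zeta_series z) {1..}" using hs by simp
qed

lemma zeta_nz:
  assumes "Re z \<ge> 2"
  shows "zeta_series z \<noteq> 0"
proof
  assume z0: "zeta_series z = 0"
  define f where "f n = 1 / (of_nat (Suc n) :: complex) powr z" for n
  define g where "g n = 1 / (real (n + 1))^2" for n
  have hs: "(f has_sum zeta_series z) UNIV"
    using zeta_has_sum(1)[of z] assms shift_has_sum[of "\<lambda>n. 1 / (of_nat n :: complex) powr z"]
    unfolding f_def by simp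
  then have fs: "f sums zeta_series z" by (rule has_sum_imp_sums)
  have gs: "(\<lambda>n. g (Suc n)) sums (pi^2/6 - 1)"
  proof -
    have "g sums (pi^2/6)" unfolding g_def using inverse_squares_sums by simp
    moreover have "g 0 = 1" unfolding g_def by simp
    ultimately show ?thesis using sums_Suc_iff[of g "pi^2/6 - 1"] by simp
  qed
  have bnd: "norm (f (Suc n)) \<le> g (Suc n)" for n
  proof -
    have "norm (f (Suc n)) = real (Suc (Suc n)) powr (- Re z)"
      using cpowr_norm[of "Suc (Suc n)" z] unfolding f_def by (simp add: norm_divide powr_minus_divide)
    also have "\<dots> \<le> real (Suc (Suc n)) powr (- 2)"
      using assms by (intro powr_mono) auto
    also have "\<dots> = g (Suc n)" unfolding g_def by (simp add: powr_minus_divide add.commute)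
    finally show ?thesis .
  qed
  have sn: "summable (\<lambda>n. norm (f (Suc n)))"
    using summable_comparison_test[of "\<lambda>n. norm (f (Suc n))" "\<lambda>n. g (Suc n)"] bnd gs
    by (auto simp: sums_iff)
  have "norm (\<Sum>n. f (Suc n)) \<le> (\<Sum>n. norm (f (Suc n)))" by (rule summable_norm[OF sn])
  also have "\<dots> \<le> (\<Sum>n. g (Suc n))"
    using bnd sn gs by (intro suminf_le) (auto simp: sums_iff)
  also have "\<dots> = pi^2/6 - 1" using gs by (simp add: sums_iff)
  also have "\<dots> < 1"
  proof -
    have "pi \<le> 3.1416" using pi_approx by simp
    then have h: "pi * pi \<le> 3.1416 * 3.1416" using pi_gt_zero by (intro mult_mono) auto
    show ?thesis using h by (simp add: power2_eq_square)
  qed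
  finally have lt: "norm (\<Sum>n. f (Suc n)) < 1" .
  have "(\<Sum>n. f (Suc n)) = zeta_series z - f 0"
    using suminf_split_head[of f] fs by (simp add: sums_iff)
  also have "\<dots> = -1" using z0 unfolding f_def by simp
  finally show False using lt by simp
qed

lemma A_term:
  assumes "d > 0" "e > 0"
  shows "of_nat (aa d) / (of_nat d :: complex) powr s * (1 / of_nat e powr (s - 1))
       = of_nat (totient d) * of_nat (d*e) / of_nat (d*e) powr s"
proof -
  have nz: "(of_nat d :: complex) powr s \<noteq> 0" "(of_nat e :: complex) powr s \<noteq> 0"
    using assms cpowr_nz by auto
  show ?thesis
    unfolding cpowr_mult cpowr_minus1[OF assms(2)] aa_def using nz assms
    by (simp add: field_simps)
qed

lemma A_series:
  assumes s: "Re s > 3"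
  shows "((\<lambda>m. of_nat (aa m) / (of_nat m :: complex) powr s) has_sum zeta_series (s-2) / zeta_series (s-1)) {1..}"
    and "(\<lambda>m. norm (of_nat (aa m) / (of_nat m :: complex) powr s)) summable_on {1..}"
proof -
  define A where "A m = of_nat (aa m) / (of_nat m :: complex) powr s" for m
  define D where "D z e = 1 / (of_nat e :: complex) powr z" for z e
  have bnd: "norm (A m) \<le> real m powr (- (Re s - 2))" if "m \<in> {1..}" for m
  proof -
    have m: "m > 0" using that by simp
    have "aa m \<le> m * m" unfolding aa_def by (simp add: totient_le)
    then have "real (aa m) \<le> real m ^ 2" by (simp add: power2_eq_square flip: of_nat_mult)
    then have "real (aa m) / real m powr Re s \<le> real m ^ 2 / real m powr Re s"
      by (intro divide_right_mono) auto
    also have "\<dots> = real m powr (- (Re s - 2))"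
      using m by (simp add: powr_diff powr_minus_divide)
    finally show ?thesis unfolding A_def by (simp add: norm_divide cpowr_norm)
  qed
  have ns: "(\<lambda>m. norm (A m)) summable_on {1..}"
    by (rule summable_on_comparison_test[OF summable_rpowr[of "Re s - 2"]]) (use s bnd in auto)
  then show "(\<lambda>m. norm (of_nat (aa m) / (of_nat m :: complex) powr s)) summable_on {1..}"
    unfolding A_def .
  have sm: "A summable_on {1..}" by (rule abs_summable_summable[OF ns])
  define SA where "SA = infsum A {1..}"
  have hA: "(A has_sum SA) {1..}" unfolding SA_def using sm by simp
  have z1: "(D (s-1) has_sum zeta_series (s-1)) {1..}" "(\<lambda>n. norm (D (s-1) n)) summable_on {1..}"
    using zeta_has_sum[of "s-1"] s unfolding D_def by auto
  have z2: "(D (s-2) has_sum zeta_series (s-2)) {1..}"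
    using zeta_has_sum[of "s-2"] s unfolding D_def by auto
  have prod: "((\<lambda>(m,e). A m * D (s-1) e) has_sum (SA * zeta_series (s-1))) ({1..} \<times> {1..})"
    by (rule has_sum_prod(1)[OF hA z1(1) ns z1(2)])
  define S where "S = Sigma {1::nat..} (\<lambda>n. {d. d dvd n})"
  have reidx: "((\<lambda>(n,d). A d * D (s-1) (n div d)) has_sum (SA * zeta_series (s-1))) S"
  proof -
    have "((\<lambda>(n,d). A d * D (s-1) (n div d)) has_sum (SA * zeta_series (s-1))) S
       = ((\<lambda>(m,e). A m * D (s-1) e) has_sum (SA * zeta_series (s-1))) ({1..} \<times> {1..})"
    proof (rule has_sum_reindex_bij_witness[where j = "\<lambda>(n,d). (d, n div d)" and i = "\<lambda>(m,e). (m*e, m)"])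
      fix a assume "a \<in> S"
      then obtain n d where a: "a = (n,d)" "n \<ge> 1" "d dvd n" unfolding S_def by auto
      then have d: "d > 0" "n div d > 0" by (auto intro!: Nat.gr0I dest: dvd_imp_le simp: dvd_div_eq_0_iff)
      show "(\<lambda>(m,e). (m*e, m)) ((\<lambda>(n,d). (d, n div d)) a) = a" using a by simp
      show "(\<lambda>(n,d). (d, n div d)) a \<in> {1..} \<times> {1..}" using a d by auto
      show "(\<lambda>(m,e). A m * D (s-1) e) ((\<lambda>(n,d). (d, n div d)) a) = (\<lambda>(n,d). A d * D (s-1) (n div d)) a"
        using a by simp
    next
      fix b assume "b \<in> {1::nat..} \<times> {1::nat..}"
      then obtain m e where b: "b = (m,e)" "m \<ge> 1" "e \<ge> 1" by auto
      show "(\<lambda>(n,d). (d, n div d)) ((\<lambda>(m,e). (m*e, m)) b) = b" using b by simp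
      show "(\<lambda>(m,e). (m*e, m)) b \<in> S" using b unfolding S_def by auto
    qed simp
    then show ?thesis using prod by simp
  qed
  have inner: "((\<lambda>d. (\<lambda>(n,d). A d * D (s-1) (n div d)) (n,d)) has_sum D (s-2) n) {d. d dvd n}"
    if "n \<in> {1..}" for n
  proof (rule has_sum_finiteI)
    have n: "n > 0" using that by simp
    show "finite {d. d dvd n}" using n by (simp add: finite_divisors_nat)
    have "(\<Sum>d | d dvd n. A d * D (s-1) (n div d)) = (\<Sum>d | d dvd n. of_nat (totient d) * of_nat n / of_nat n powr s)"
    proof (rule sum.cong[OF refl])
      fix d assume "d \<in> {d. d dvd n}"
      then have dd: "d dvd n" by simp
      then have d: "d > 0" "n div d > 0" using n by (auto intro!: Nat.gr0I simp: dvd_div_eq_0_iff)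
      have "n = d * (n div d)" using dd by simp
      then show "A d * D (s-1) (n div d) = of_nat (totient d) * of_nat n / of_nat n powr s"
        unfolding A_def D_def using A_term[OF d, of s] by metis
    qed
    also have "\<dots> = of_nat (\<Sum>d | d dvd n. totient d) * of_nat n / of_nat n powr s"
      by (simp add: sum_divide_distrib sum_distrib_right)
    also have "\<dots> = D (s-2) n"
      unfolding totient_divisor_sum D_def cpowr_minus2[OF n] using cpowr_nz[OF n, of s] n
      by (simp add: field_simps power2_eq_square)
    finally show "D (s-2) n = (\<Sum>d\<in>{d. d dvd n}. (\<lambda>(n,d). A d * D (s-1) (n div d)) (n,d))" by simp
  qed
  have "(D (s-2) has_sum (SA * zeta_series (s-1))) {1..}"
    by (rule has_sum_Sigma'[OF reidx[unfolded S_def] inner]) auto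
  then have eq: "SA * zeta_series (s-1) = zeta_series (s-2)" using z2 by (rule has_sum_unique)
  have "zeta_series (s-1) \<noteq> 0" using s by (intro zeta_nz) auto
  then have "SA = zeta_series (s-2) / zeta_series (s-1)" using eq by (simp add: field_simps)
  then show "((\<lambda>m. of_nat (aa m) / (of_nat m :: complex) powr s) has_sum zeta_series (s-2) / zeta_series (s-1)) {1..}"
    using hA unfolding A_def by simp
qed

lemma geom_has_sum:
  fixes c w :: complex
  assumes "norm w < 1"
  shows "((\<lambda>j. c * w^j) has_sum (c / (1 - w))) UNIV"
proof (rule norm_summable_imp_has_sum)
  have "summable (\<lambda>j. norm c * norm w ^ j)"
    using assms by (intro summable_mult summable_geometric) auto
  then show "summable (\<lambda>j. norm (c * w^j))" by (simp add: norm_mult norm_power)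
  show "(\<lambda>j. c * w^j) sums (c / (1 - w))"
    using sums_mult[OF geometric_sums[OF assms], of c] by simp
qed

lemma sq_bound:
  assumes "m > 0" "x \<le> m * m"
  shows "real x / real m powr t \<le> real m powr (- (t - 2))"
proof -
  have "real x \<le> real m ^ 2" using assms(2) by (simp add: power2_eq_square flip: of_nat_mult)
  then have "real x / real m powr t \<le> real m ^ 2 / real m powr t"
    by (intro divide_right_mono) auto
  also have "\<dots> = real m powr (- (t - 2))"
    using assms(1) by (simp add: powr_diff powr_minus_divide)
  finally show ?thesis .
qed

lemma pp_inj: "inj_on (\<lambda>(p,k). p^k) ({p::nat. prime p} \<times> {1..})"
proof (rule inj_onI, clarify)
  fix p k q j :: nat
  assume "prime p" "prime q" "k \<ge> 1" "j \<ge> 1" "p^k = q^j"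
  then show "p = q \<and> k = j" using prime_power_inj'[of p q k j] by auto
qed

lemma pp_summable:
  assumes "t > 1"
  shows "(\<lambda>(p,k). real (p^k) powr (-t)) summable_on ({p::nat. prime p} \<times> {1..})"
proof -
  have "(\<lambda>n::nat. real n powr (-t)) summable_on ((\<lambda>(p,k). p^k) ` ({p::nat. prime p} \<times> {1..}))"
  proof (rule summable_on_subset_banach[OF summable_rpowr[OF assms]])
    show "(\<lambda>(p,k). p^k) ` ({p::nat. prime p} \<times> {1..}) \<subseteq> {1..}"
      by (auto simp: prime_gt_0_nat Suc_le_eq)
  qed
  then have "((\<lambda>n::nat. real n powr (-t)) \<circ> (\<lambda>(p,k). p^k)) summable_on ({p::nat. prime p} \<times> {1..})"
    using summable_on_reindex[OF pp_inj] by blast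
  then show ?thesis by (simp add: o_def case_prod_unfold)
qed

lemma C_series:
  assumes s: "Re s > 3"
  shows "((\<lambda>(p,k). of_nat (cc p k) / (of_nat (p^k) :: complex) powr s) has_sum (F_prime (s-2) - F_prime (s-1))) ({p. prime p} \<times> {1..})"
    and "(\<lambda>z. norm ((\<lambda>(p,k). of_nat (cc p k) / (of_nat (p^k) :: complex) powr s) z)) summable_on ({p. prime p} \<times> {1..})"
proof -
  define PP where "PP = {p::nat. prime p}"
  define X where "X = (\<lambda>(p,k). of_nat (p^(k-1) * p^k) / (of_nat (p^k) :: complex) powr s)"
  define Y where "Y = (\<lambda>(p,k). of_nat (p^(k-1)) / (of_nat (p^k) :: complex) powr s)"
  define C where "C = (\<lambda>(p,k). of_nat (cc p k) / (of_nat (p^k) :: complex) powr s)"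
  define f1 where "f1 p = 1 / ((of_nat p :: complex) powr (s - 2 + 1) - of_nat p)" for p :: nat
  define f2 where "f2 p = 1 / ((of_nat p :: complex) powr (s - 1 + 1) - of_nat p)" for p :: nat
  have CXY: "C z = X z - Y z" if zin: "z \<in> PP \<times> {1..}" for z
  proof -
    obtain p k where z: "z = (p,k)" "prime p" "k \<ge> 1" using zin unfolding PP_def by (cases z) auto
    have "p^k \<ge> 1" using z prime_gt_0_nat[OF z(2)] by (simp add: Suc_le_eq)
    then have "(of_nat (cc p k) :: complex) = of_nat (p^(k-1) * p^k) - of_nat (p^(k-1))"
      unfolding cc_def by (simp add: of_nat_diff algebra_simps)
    then show ?thesis unfolding z C_def X_def Y_def by (simp add: diff_divide_distrib)
  qed
  have nX: "norm (X z) \<le> (\<lambda>(p,k). real (p^k) powr (- (Re s - 2))) z" if zin: "z \<in> PP \<times> {1..}" for z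
  proof -
    obtain p k where z: "z = (p,k)" "prime p" "k \<ge> 1" using zin unfolding PP_def by (cases z) auto
    have pk: "p^k > 0" using z prime_gt_0_nat[OF z(2)] by simp
    have "p^(k-1) * p^k \<le> p^k * p^k" using z prime_gt_0_nat[OF z(2)] by (intro mult_right_mono power_increasing) auto
    then show ?thesis unfolding z X_def using sq_bound[OF pk, of "p^(k-1) * p^k" "Re s"]
      by (simp add: norm_divide norm_mult cpowr_norm del: of_nat_power)
  qed
  have nXY: "norm (Y z) \<le> norm (X z)" "norm (C z) \<le> norm (X z)" if zin: "z \<in> PP \<times> {1..}" for z
  proof -
    obtain p k where z: "z = (p,k)" "prime p" "k \<ge> 1" using zin unfolding PP_def by (cases z) auto
    have pk: "p^k \<ge> 1" using z prime_gt_0_nat[OF z(2)] by (simp add: Suc_le_eq)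
    have "p^(k-1) \<le> p^(k-1) * p^k" using pk by simp
    then show "norm (Y z) \<le> norm (X z)" unfolding z X_def Y_def
      by (simp add: norm_divide divide_right_mono del: of_nat_power of_nat_mult)
    have "cc p k \<le> p^(k-1) * p^k" unfolding cc_def by simp
    then show "norm (C z) \<le> norm (X z)" unfolding z X_def C_def
      by (simp add: norm_divide divide_right_mono del: of_nat_power of_nat_mult)
  qed
  have sX: "(\<lambda>z. norm (X z)) summable_on (PP \<times> {1..})"
    using summable_on_comparison_test[OF pp_summable[of "Re s - 2"], of "\<lambda>z. norm (X z)"] s nX
    unfolding PP_def by auto
  have sY: "(\<lambda>z. norm (Y z)) summable_on (PP \<times> {1..})"
    using summable_on_comparison_test[OF sX, of "\<lambda>z. norm (Y z)"] nXY by auto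
  show "(\<lambda>z. norm ((\<lambda>(p,k). of_nat (cc p k) / (of_nat (p^k) :: complex) powr s) z)) summable_on ({p. prime p} \<times> {1..})"
    using summable_on_comparison_test[OF sX, of "\<lambda>z. norm (C z)"] nXY unfolding C_def PP_def by auto
  have innerX: "((\<lambda>k. X (p,k)) has_sum f1 p) {1..}" if "p \<in> PP" for p
  proof -
    have p: "p > 1" using that prime_gt_1_nat unfolding PP_def by auto
    define P where "P = (of_nat p :: complex)"
    define q where "q = P powr s"
    have P0: "P \<noteq> 0" unfolding P_def using p by simp
    have q0: "q \<noteq> 0" unfolding q_def P_def using cpowr_nz[of p s] p by simp
    have nw: "norm (P^2 / q) < 1"
    proof -
      have "norm (P^2 / q) = real p powr (2 - Re s)"
        unfolding P_def q_def using p by (simp add: norm_divide cpowr_norm norm_power powr_diff)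
      also have "\<dots> < 1" using p s by (intro powr_less_one) auto
      finally show ?thesis .
    qed
    then have w1: "q - P^2 \<noteq> 0" using q0 by (auto simp: norm_divide)
    have "((\<lambda>j. (P/q) * (P^2/q)^j) has_sum ((P/q) / (1 - P^2/q))) UNIV"
      by (rule geom_has_sum[OF nw])
    moreover have "X (p, Suc j) = (P/q) * (P^2/q)^j" for j
      unfolding X_def q_def P_def cpowr_pow using p
      by (simp add: power_divide power_mult_distrib field_simps power2_eq_square)
    moreover have "(P/q) / (1 - P^2/q) = f1 p"
    proof -
      have e: "s - 2 + 1 = s - 1" by simp
      have h: "P powr (s - 1) = q / P" unfolding q_def P_def using cpowr_minus1[of p s] p by simp
      have w2: "q / P - P \<noteq> 0" using w1 P0 by (auto simp: field_simps power2_eq_square)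
      have w3: "1 - P^2 / q \<noteq> 0" using w1 q0 by (auto simp: field_simps)
      show ?thesis unfolding f1_def e P_def[symmetric] h using P0 q0 w2 w3
        by (simp add: divide_simps) (auto simp: field_simps power2_eq_square)
    qed
    ultimately show ?thesis using shift_has_sum[of "\<lambda>k. X (p,k)"] by simp
  qed
  have innerY: "((\<lambda>k. Y (p,k)) has_sum f2 p) {1..}" if "p \<in> PP" for p
  proof -
    have p: "p > 1" using that prime_gt_1_nat unfolding PP_def by auto
    define P where "P = (of_nat p :: complex)"
    define q where "q = P powr s"
    have P0: "P \<noteq> 0" unfolding P_def using p by simp
    have q0: "q \<noteq> 0" unfolding q_def P_def using cpowr_nz[of p s] p by simp
    have nw: "norm (P / q) < 1"
    proof -
      have "norm (P / q) = real p powr (1 - Re s)"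
        unfolding P_def q_def using p by (simp add: norm_divide cpowr_norm powr_diff)
      also have "\<dots> < 1" using p s by (intro powr_less_one) auto
      finally show ?thesis .
    qed
    then have w1: "q - P \<noteq> 0" using q0 by (auto simp: norm_divide)
    have "((\<lambda>j. (1/q) * (P/q)^j) has_sum ((1/q) / (1 - P/q))) UNIV"
      by (rule geom_has_sum[OF nw])
    moreover have "Y (p, Suc j) = (1/q) * (P/q)^j" for j
      unfolding Y_def q_def P_def cpowr_pow using p
      by (simp add: power_divide field_simps)
    moreover have "(1/q) / (1 - P/q) = f2 p"
    proof -
      have e: "s - 1 + 1 = s" by simp
      show ?thesis unfolding f2_def e P_def[symmetric] q_def[symmetric] using P0 q0 w1
        by (simp add: field_simps)
    qed
    ultimately show ?thesis using shift_has_sum[of "\<lambda>k. Y (p,k)"] by simp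
  qed
  have hX: "(X has_sum infsum X (PP \<times> {1..})) (PP \<times> {1..})"
    using abs_summable_summable[OF sX] by simp
  have hY: "(Y has_sum infsum Y (PP \<times> {1..})) (PP \<times> {1..})"
    using abs_summable_summable[OF sY] by simp
  have o1: "(f1 has_sum infsum X (PP \<times> {1..})) PP"
    using has_sum_Sigma'[OF hX[unfolded case_prod_unfold]] innerX by auto
  have o2: "(f2 has_sum infsum Y (PP \<times> {1..})) PP"
    using has_sum_Sigma'[OF hY[unfolded case_prod_unfold]] innerY by auto
  have F1: "F_prime (s-2) = infsum X (PP \<times> {1..})"
    unfolding F_prime_def using o1 unfolding f1_def PP_def by (simp add: infsumI)
  have F2: "F_prime (s-1) = infsum Y (PP \<times> {1..})"
    unfolding F_prime_def using o2 unfolding f2_def PP_def by (simp add: infsumI)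
  have hsum: "((\<lambda>z. X z + - Y z) has_sum (infsum X (PP \<times> {1..}) + - infsum Y (PP \<times> {1..}))) (PP \<times> {1..})"
  proof (rule has_sum_add[OF hX])
    show "((\<lambda>z. - Y z) has_sum - infsum Y (PP \<times> {1..})) (PP \<times> {1..})" using hY by (simp add: has_sum_uminus)
  qed
  have "(C has_sum (F_prime (s-2) - F_prime (s-1))) (PP \<times> {1..})"
  proof -
    have "((\<lambda>z. X z + - Y z) has_sum (F_prime (s-2) - F_prime (s-1))) (PP \<times> {1..})"
      using hsum unfolding F1 F2 by simp
    then show ?thesis using has_sum_cong[of "PP \<times> {1..}" C "\<lambda>z. X z + - Y z"] CXY by simp
  qed
  then show "((\<lambda>(p,k). of_nat (cc p k) / (of_nat (p^k) :: complex) powr s) has_sum (F_prime (s-2) - F_prime (s-1))) ({p. prime p} \<times> {1..})"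
    unfolding C_def PP_def .
qed

theorem mainTheorem20:
  fixes s :: complex
  assumes "Re s > 3"
  shows "(\<lambda>n. of_nat (totient (Suc n) * arith_deriv (Suc n)) / (of_nat (Suc n)) powr s)
           sums (zeta_series (s - 2) / zeta_series (s - 1) * (F_prime (s - 2) - F_prime (s - 1)))"
proof -
  define Cf where "Cf = (\<lambda>(p,k). of_nat (cc p k) / (of_nat (p^k) :: complex) powr s)"
  define Af where "Af = (\<lambda>m. of_nat (aa m) / (of_nat m :: complex) powr s)"
  define Fd where "Fd = F_prime (s-2) - F_prime (s-1)"
  define ZZ where "ZZ = zeta_series (s - 2) / zeta_series (s - 1)"
  define T where "T n = of_nat (totient n * arith_deriv n) / (of_nat n :: complex) powr s" for n
  define PP where "PP = {p::nat. prime p}"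
  have hC: "(Cf has_sum Fd) (PP \<times> {1..})" and nC: "(\<lambda>z. norm (Cf z)) summable_on (PP \<times> {1..})"
    using C_series[OF assms] unfolding Cf_def Fd_def PP_def by auto
  have hA: "(Af has_sum ZZ) {1..}" and nA: "(\<lambda>z. norm (Af z)) summable_on {1..}"
    using A_series[OF assms] unfolding Af_def ZZ_def by auto
  have prod: "((\<lambda>(pk,m). Cf pk * Af m) has_sum (Fd * ZZ)) ((PP \<times> {1..}) \<times> {1..})"
    by (rule has_sum_prod(1)[OF hC hA nC nA])
  define S where "S = Sigma {1::nat..} QQ"
  define g where "g = (\<lambda>(n,(p,k)). Cf (p,k) * Af (n div p^k))"
  have reidx: "(g has_sum (Fd * ZZ)) S"
  proof -
    have "(g has_sum (Fd * ZZ)) S = ((\<lambda>(pk,m). Cf pk * Af m) has_sum (Fd * ZZ)) ((PP \<times> {1..}) \<times> {1..})"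
    proof (rule has_sum_reindex_bij_witness[where j = "\<lambda>(n,(p,k)). ((p,k), n div p^k)"
                                              and i = "\<lambda>((p,k),m). (p^k*m, (p,k))"])
      fix a assume "a \<in> S"
      then obtain n p k where a: "a = (n,(p,k))" "n \<ge> 1" "prime p" "k \<ge> 1" "p^k dvd n"
        unfolding S_def QQ_def by auto
      then have d: "n div p^k > 0" by (auto intro!: Nat.gr0I simp: dvd_div_eq_0_iff)
      show "(\<lambda>((p,k),m). (p^k*m, (p,k))) ((\<lambda>(n,(p,k)). ((p,k), n div p^k)) a) = a" using a by simp
      show "(\<lambda>(n,(p,k)). ((p,k), n div p^k)) a \<in> (PP \<times> {1..}) \<times> {1..}" using a d unfolding PP_def by auto
      show "(\<lambda>(pk,m). Cf pk * Af m) ((\<lambda>(n,(p,k)). ((p,k), n div p^k)) a) = g a"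
        using a unfolding g_def by simp
    next
      fix b assume "b \<in> (PP \<times> {1::nat..}) \<times> {1::nat..}"
      then obtain p k m where b: "b = ((p,k),m)" "prime p" "k \<ge> 1" "m \<ge> 1" unfolding PP_def by auto
      have pk: "p^k > 0" using b prime_gt_0_nat[OF b(2)] by simp
      show "(\<lambda>(n,(p,k)). ((p,k), n div p^k)) ((\<lambda>((p,k),m). (p^k*m, (p,k))) b) = b" using b pk by simp
      show "(\<lambda>((p,k),m). (p^k*m, (p,k))) b \<in> S" using b pk unfolding S_def QQ_def by auto
    qed simp
    then show ?thesis using prod by simp
  qed
  have inner: "((\<lambda>pk. g (n,pk)) has_sum T n) (QQ n)" if "n \<in> {1..}" for n
  proof (rule has_sum_finiteI)
    have n: "n > 0" using that by simp
    show "finite (QQ n)" by (rule finite_QQ[OF n])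
    have "(\<Sum>pk\<in>QQ n. g (n,pk)) = (\<Sum>(p,k)\<in>QQ n. of_nat (cc p k * aa (n div p^k)) / (of_nat n :: complex) powr s)"
    proof (rule sum.cong[OF refl], clarify)
      fix p k assume "(p,k) \<in> QQ n"
      then have pk: "prime p" "p^k dvd n" by (auto simp: QQ_def)
      have "n = p^k * (n div p^k)" using pk by simp
      then have "(of_nat n :: complex) powr s = of_nat (p^k) powr s * of_nat (n div p^k) powr s"
        by (metis cpowr_mult)
      then show "g (n,(p,k)) = of_nat (cc p k * aa (n div p^k)) / (of_nat n :: complex) powr s"
        unfolding g_def Cf_def Af_def by simp
    qed
    also have "\<dots> = of_nat (\<Sum>(p,k)\<in>QQ n. cc p k * aa (n div p^k)) / (of_nat n :: complex) powr s"
      by (simp add: sum_divide_distrib case_prod_unfold)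
    also have "\<dots> = T n" unfolding arith_id[OF n] T_def ..
    finally show "T n = (\<Sum>pk\<in>QQ n. g (n,pk))" by simp
  qed
  have "(T has_sum (Fd * ZZ)) {1..}"
    by (rule has_sum_Sigma'[OF reidx[unfolded S_def g_def] inner[unfolded g_def]]) auto
  then have "((\<lambda>n. T (Suc n)) has_sum (Fd * ZZ)) UNIV" using shift_has_sum[of T] by simp
  then have "(\<lambda>n. T (Suc n)) sums (ZZ * Fd)" by (simp add: has_sum_imp_sums mult.commute)
  then show ?thesis unfolding T_def ZZ_def Fd_def .
qed


end
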